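(* Suppose that $2\le n_0<\infty$ and that $S$ is submultiplicative on $[1,n_0]$. Then for every $M>0$ there exist $N_0>n_0$ and an extension of $S$ to $[1,N_0]$ which is submultiplicative on $[1,N_0]$ and satisfies $S(N_0)>M$.
   Context: Let $2\le n_0\le\infty$ and let $S$ be a real-valued function on $[1,n_0]$ (on $[1,\infty)$ if $n_0=\infty$). $S$ is called submultiplicative on $[1,n_0]$ if: (a) $S$ is piecewise-linear, continuous, strictly increasing and concave; (b) $S(x)=x$ for $1\le x\le 2$; (c) $S(xy)\le S(x)S(y)$ for all $x,y$ with $1\le x,y,xy\le n_0$. *)

theory Defs
  imports "HOL-Analysis.Analysis"
begin

definition piecewise_linear_on :: "real \<Rightarrow> real \<Rightarrow> (real \<Rightarrow> real) \<Rightarrow> bool" where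
  "piecewise_linear_on a b S \<longleftrightarrow>
     (\<exists>P. finite P \<and> a \<in> P \<and> b \<in> P \<and> P \<subseteq> {a..b} \<and>
        (\<forall>x\<in>P. \<forall>y\<in>P. x < y \<and> {x<..<y} \<inter> P = {} \<longrightarrow>
           (\<exists>m c. \<forall>t\<in>{x..y}. S t = m * t + c)))"

definition submultiplicative_on :: "real \<Rightarrow> (real \<Rightarrow> real) \<Rightarrow> bool" where
  "submultiplicative_on n0 S \<longleftrightarrow>
     piecewise_linear_on 1 n0 S \<and>
     continuous_on {1..n0} S \<and>
     strict_mono_on {1..n0} S \<and>
     concave_on {1..n0} S \<and>
     (\<forall>x\<in>{1..2}. S x = x) \<and>
     (\<forall>x y. 1 \<le> x \<longrightarrow> 1 \<le> y \<longrightarrow> x * y \<le> n0 \<longrightarrow> S (x * y) \<le> S x * S y)"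

end

theory Submission imports Defs begin

lemma slope_bound:
  fixes S :: "real \<Rightarrow> real"
  assumes conc: "concave_on {1..n} S" and p: "1 \<le> p" "p < n"
    and lin: "\<forall>t\<in>{p..n}. S t = m*t + c" and uv: "1 \<le> u" "u \<le> v" "v \<le> n"
  shows "S v - S u \<ge> m*(v-u)"
proof (cases "p \<le> u")
  case True
  then show ?thesis using lin uv by (auto simp: algebra_simps)
next
  case False
  have f: "convex_on {1..n} (\<lambda>x. - S x)" using conc by (simp add: concave_on_def)
  have A: "(- S u - - S n) / (u - n) \<le> (- S p - - S n) / (p - n)"
    using convex_on_slope_le(2)[OF f, of u n p] False p uv by auto
  have un: "u < n" "u - n \<noteq> 0" "n - u \<noteq> 0" "p - n \<noteq> 0" using False p by auto
  have Sp: "S p = m*p + c" and Sn: "S n = m*n+c" using lin p by auto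
  have "(- S p - - S n) / (p - n) = -m" using Sp Sn un by (simp add: field_simps)
  moreover have "(- S u - - S n) / (u - n) = - ((S n - S u) / (n - u))"
    using un by (simp add: field_simps)
  ultimately have A2: "(S n - S u) / (n - u) \<ge> m" using A by linarith
  hence A3: "S n - S u \<ge> m * (n - u)" using False p by (simp add: le_divide_eq)
  show ?thesis
  proof (cases "v = n")
    case True then show ?thesis using A3 by simp
  next
    case False
    show ?thesis
    proof (cases "u = v")
      case True then show ?thesis by simp
    next
    case uv': False
    have B: "(- S u - - S v) / (u - v) \<le> (- S u - - S n) / (u - n)"
      using convex_on_slope_le(1)[OF f, of u n v] False uv' p uv \<open>\<not> p \<le> u\<close> by auto
    have "(S v - S u) / (v - u) \<ge> (S n - S u) / (n - u)"
    proof -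
      have "(- S u - - S v) / (u - v) = - ((S v - S u) / (v - u))"
        using uv' uv by (simp add: divide_simps algebra_simps)
      moreover have "(- S u - - S n) / (u - n) = - ((S n - S u) / (n - u))"
        using un by (simp add: field_simps)
      ultimately show ?thesis using B by linarith
    qed
    hence "(S v - S u) / (v - u) \<ge> m" using A2 by linarith
    then show ?thesis using uv' uv by (auto simp: le_divide_eq)
    qed
  qed
qed

lemma step:
  fixes n :: real and S :: "real \<Rightarrow> real"
  assumes n2: "2 \<le> n" and sm: "submultiplicative_on n S"
  shows "\<exists>N T. N > n \<and> (\<forall>x\<in>{1..n}. T x = S x) \<and> submultiplicative_on N T \<and> T N = S n + 1"
proof -
  have pl: "piecewise_linear_on 1 n S" and cont: "continuous_on {1..n} S"
    and smono: "strict_mono_on {1..n} S" and conc: "concave_on {1..n} S"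
    and id12: "\<forall>x\<in>{1..2}. S x = x"
    and mult: "\<forall>x y. 1 \<le> x \<longrightarrow> 1 \<le> y \<longrightarrow> x * y \<le> n \<longrightarrow> S (x * y) \<le> S x * S y"
    using sm unfolding submultiplicative_on_def by auto
  obtain P where Pfin: "finite P" and P1: "1 \<in> P" and Pn: "n \<in> P" and Psub: "P \<subseteq> {1..n}"
    and Pcons: "\<forall>x\<in>P. \<forall>y\<in>P. x < y \<and> {x<..<y} \<inter> P = {} \<longrightarrow>
           (\<exists>m c. \<forall>t\<in>{x..y}. S t = m * t + c)"
    using pl unfolding piecewise_linear_on_def by blast
  define Q where "Q = {x\<in>P. x < n}"
  have Qfin: "finite Q" using Pfin Q_def by auto
  have Qne: "1 \<in> Q" using P1 n2 Q_def by auto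
  define p where "p = Max Q"
  have pQ: "p \<in> Q" using Qfin Qne p_def Max_in by blast
  have pP: "p \<in> P" and pn: "p < n" using pQ Q_def by auto
  have p1: "1 \<le> p" using Qfin Qne p_def by (simp add: Max_ge)
  have empt: "{p<..<n} \<inter> P = {}"
  proof (rule ccontr)
    assume "{p<..<n} \<inter> P \<noteq> {}"
    then obtain x where "x \<in> P" "p < x" "x < n" by auto
    hence "x \<in> Q" using Q_def by auto
    hence "x \<le> p" using Qfin p_def by simp
    thus False using \<open>p < x\<close> by simp
  qed
  obtain m c where lin: "\<forall>t\<in>{p..n}. S t = m * t + c"
    using Pcons[rule_format, OF pP Pn conjI[OF pn empt]] by blast
  have "S p < S n" using smono p1 pn unfolding strict_mono_on_def by auto
  moreover have "S p = m*p + c" "S n = m*n + c" using lin p1 pn by auto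
  ultimately have "m * (n - p) > 0" by (simp add: algebra_simps)
  hence mpos: "m > 0" using pn by (simp add: zero_less_mult_iff)
  have slope: "\<And>u v. 1 \<le> u \<Longrightarrow> u \<le> v \<Longrightarrow> v \<le> n \<Longrightarrow> m*(v-u) \<le> S v - S u"
    using slope_bound[OF conc p1 pn lin] by blast
  have Smono: "\<And>u v. 1 \<le> u \<Longrightarrow> u \<le> v \<Longrightarrow> v \<le> n \<Longrightarrow> S u \<le> S v"
  proof -
    fix u v :: real assume "1 \<le> u" "u \<le> v" "v \<le> n"
    hence "m*(v-u) \<le> S v - S u" "m*(v-u) \<ge> 0" using slope mpos by auto
    thus "S u \<le> S v" by linarith
  qed
  have S1: "S 1 = 1" and S2: "S 2 = 2" using id12 by auto
  have Sn2: "S n \<ge> 2" using Smono[of 2 n] n2 S2 by simp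
  have Sge1: "\<And>u. 1 \<le> u \<Longrightarrow> u \<le> n \<Longrightarrow> S u \<ge> 1" 
  proof -
    fix u :: real assume "1 \<le> u" "u \<le> n" thus "S u \<ge> 1" using Smono[of 1 u] S1 by simp
  qed
  define d where "d = min m 1 / (4*n)"
  have dpos: "d > 0" using mpos n2 d_def by auto
  have dn: "d * n = min m 1 / 4" using n2 d_def by auto
  have dn1: "d * n \<le> 1/4" and dnm: "d * n \<le> m/4" using dn by auto
  have dm: "d \<le> m" 
  proof -
    have "d * 1 \<le> d * n" using dpos n2 by (intro mult_left_mono) auto
    thus ?thesis using dnm mpos by linarith
  qed
  define N where "N = n + 1/d"
  have Nn: "N > n" using dpos N_def by simp
  have dN: "d * N = d * n + 1" using dpos N_def by (simp add: algebra_simps)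
  define T where "T = (\<lambda>t. if t \<le> n then S t else S n + d*(t - n))"
  have TS: "\<And>t. t \<le> n \<Longrightarrow> T t = S t" using T_def by simp
  have Tlin: "\<And>t. n \<le> t \<Longrightarrow> T t = S n + d*(t - n)" using T_def by auto
  have TN: "T N = S n + 1" using Tlin[of N] Nn dpos N_def by simp
  have Tmono: "\<And>u v. 1 \<le> u \<Longrightarrow> u < v \<Longrightarrow> v \<le> N \<Longrightarrow> T u < T v"
  proof -
    fix u v :: real assume uv: "1 \<le> u" "u < v" "v \<le> N"
    show "T u < T v"
    proof (cases "v \<le> n")
      case True then show ?thesis using smono uv TS unfolding strict_mono_on_def by auto
    next
      case False
      have "T v > S n" using Tlin[of v] dpos False by simp
      show ?thesis
      proof (cases "u \<le> n")
        case True then show ?thesis using TS Smono[of u n] uv \<open>T v > S n\<close> by simp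
      next
        case False then show ?thesis using Tlin[of u] Tlin[of v] uv dpos by simp
      qed
    qed
  qed
  have Tge1: "\<And>x. 1 \<le> x \<Longrightarrow> x \<le> N \<Longrightarrow> T x \<ge> 1"
  proof -
    fix x :: real assume "1 \<le> x" "x \<le> N"
    thus "T x \<ge> 1" using Tmono[of 1 x] TS[of 1] S1 n2 by (cases "x = 1") auto
  qed
  have Tge2: "\<And>x. 2 \<le> x \<Longrightarrow> x \<le> N \<Longrightarrow> T x \<ge> 2"
  proof -
    fix x :: real assume "2 \<le> x" "x \<le> N"
    thus "T x \<ge> 2" using Tmono[of 2 x] TS[of 2] S2 n2 by (cases "x = 2") auto
  qed
  have T12: "\<forall>x\<in>{1..2}. T x = x" using TS id12 n2 by auto
  have part_pl: "piecewise_linear_on 1 N T"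
    unfolding piecewise_linear_on_def
  proof (intro exI[of _ "insert N P"] conjI ballI impI)
    show "finite (insert N P)" using Pfin by simp
    show "1 \<in> insert N P" using P1 by simp
    show "N \<in> insert N P" by simp
    show "insert N P \<subseteq> {1..N}" using Psub Nn n2 by auto
  next
    fix x y assume xP: "x \<in> insert N P" and yP: "y \<in> insert N P"
      and xy: "x < y \<and> {x<..<y} \<inter> insert N P = {}"
    show "\<exists>m c. \<forall>t\<in>{x..y}. T t = m * t + c"
    proof (cases "y = N")
      case True
      have "x \<noteq> N" using xy True by auto
      hence "x \<in> P" using xP by simp
      hence "x \<le> n" using Psub by auto
      moreover have "\<not> x < n"
      proof
        assume "x < n"
        hence "n \<in> {x<..<y} \<inter> insert N P" using True Nn Pn by auto
        thus False using xy by auto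
      qed
      ultimately have "x = n" by simp
      have "\<forall>t\<in>{x..y}. T t = d * t + (S n - d*n)"
        using Tlin \<open>x = n\<close> by (auto simp: algebra_simps)
      thus ?thesis by blast
    next
      case False
      hence yP': "y \<in> P" using yP by simp
      hence yn: "y \<le> n" using Psub by auto
      hence "x \<noteq> N" using xy Nn by auto
      hence xP': "x \<in> P" using xP by simp
      have "{x<..<y} \<inter> P = {}" using xy by auto
      then obtain m' c' where "\<forall>t\<in>{x..y}. S t = m' * t + c'"
        using Pcons[rule_format, OF xP' yP'] xy by blast
      hence "\<forall>t\<in>{x..y}. T t = m' * t + c'" using TS yn by auto
      thus ?thesis by blast
    qed
  qed
  have part_cont: "continuous_on {1..N} T"
  proof -
    have U: "{1..N} = {1..n} \<union> {n..N}" using Nn n2 by auto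
    have c1: "continuous_on {1..n} T"
      using cont continuous_on_cong[of "{1..n}" "{1..n}" S T] TS by auto
    have c0: "continuous_on {n..N} (\<lambda>t. S n + d*(t-n))" by (intro continuous_intros)
    have c2: "continuous_on {n..N} T"
      using c0 continuous_on_cong[of "{n..N}" "{n..N}" "\<lambda>t. S n + d*(t-n)" T] Tlin by auto
    show ?thesis unfolding U by (intro continuous_on_closed_Un c1 c2) auto
  qed
  have part_sm: "strict_mono_on {1..N} T"
    using Tmono unfolding strict_mono_on_def by auto
  define G where "G = (\<lambda>u. S u - d*u)"
  have rep: "\<And>w. T w = G (min w n) + d*w"
    unfolding G_def using TS Tlin by (auto simp: min_def algebra_simps)
  have Gmono: "\<And>u v. 1 \<le> u \<Longrightarrow> u \<le> v \<Longrightarrow> v \<le> n \<Longrightarrow> G u \<le> G v"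
  proof -
    fix u v :: real assume uv: "1 \<le> u" "u \<le> v" "v \<le> n"
    have "m*(v-u) \<le> S v - S u" using slope uv by blast
    moreover have "d*(v-u) \<le> m*(v-u)" using dm uv by (intro mult_right_mono) auto
    ultimately show "G u \<le> G v" unfolding G_def by (simp add: algebra_simps)
  qed
  have Gconc: "\<And>a b t. 1 \<le> a \<Longrightarrow> a \<le> n \<Longrightarrow> 1 \<le> b \<Longrightarrow> b \<le> n \<Longrightarrow> 0 \<le> t \<Longrightarrow> t \<le> 1 \<Longrightarrow>
      G ((1-t)*a + t*b) \<ge> (1-t) * G a + t * G b"
  proof -
    fix a b t :: real assume h: "1 \<le> a" "a \<le> n" "1 \<le> b" "b \<le> n" "0 \<le> t" "t \<le> 1"
    have "S ((1-t)*a + t*b) \<ge> (1-t) * S a + t * S b"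
      using concave_onD[OF conc, of t a b] h by simp
    thus "G ((1-t)*a + t*b) \<ge> (1-t) * G a + t * G b" unfolding G_def by (simp add: algebra_simps)
  qed
  have part_conc: "concave_on {1..N} T"
  proof (rule concave_on_linorderI)
    show "convex {1..N}" by simp
  next
    fix t x y :: real assume t: "0 < t" "t < 1" and x: "x \<in> {1..N}" and y: "y \<in> {1..N}" and "x < y"
    define a where "a = min x n"
    define b where "b = min y n"
    define z where "z = (1-t)*x + t*y"
    define w where "w = (1-t)*a + t*b"
    have a: "1 \<le> a" "a \<le> n" "a \<le> x" using x n2 a_def by auto
    have b: "1 \<le> b" "b \<le> n" "b \<le> y" using y n2 b_def by auto
    have "(1-t)*a \<le> (1-t)*x" using a t by (intro mult_left_mono) auto
    moreover have "t*b \<le> t*y" using b t by (intro mult_left_mono) auto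
    ultimately have wz: "w \<le> z" using w_def z_def by simp
    have "(1-t)*a \<le> (1-t)*n" using a t by (intro mult_left_mono) auto
    moreover have "t*b \<le> t*n" using b t by (intro mult_left_mono) auto
    ultimately have wn: "w \<le> n" using w_def by (simp add: algebra_simps)
    have "(1-t)*1 \<le> (1-t)*a" using a t by (intro mult_left_mono) auto
    moreover have "t*1 \<le> t*b" using b t by (intro mult_left_mono) auto
    ultimately have w1: "1 \<le> w" using w_def by (simp add: algebra_simps)
    have "G w \<le> G (min z n)" using Gmono[of w "min z n"] w1 wz wn by simp
    moreover have "G w \<ge> (1-t) * G a + t * G b" using Gconc[of a b t] a b t w_def by simp
    ultimately have "T z \<ge> (1-t) * G a + t * G b + d*z" using rep[of z] by simp
    moreover have "(1-t) * T x + t * T y = (1-t) * G a + t * G b + d*z"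
      unfolding z_def using rep[of x] rep[of y] a_def b_def by (simp add: algebra_simps)
    ultimately show "(1 - t) * T x + t * T y \<le> T ((1 - t) *\<^sub>R x + t *\<^sub>R y)"
      using z_def by simp
  qed
  have key: "S n + d*(a*b - n) \<le> T a * T b" if a1: "1 \<le> a" and bn: "n \<le> b" and abN: "a*b \<le> N" for a b
  proof -
    have Tb: "T b = S n + d*(b-n)" using Tlin bn by simp
    have "b \<le> a*b" using a1 bn n2 by (simp add: mult_le_cancel_right1)
    hence bN: "b \<le> N" using abN by simp
    have aN: "a \<le> a*b" using a1 bn n2 by (simp add: mult_le_cancel_left1)
    have snd: "S n - d*n \<ge> 0" using Sn2 dn1 by linarith
    show ?thesis
    proof (cases "a \<le> 2")
      case True
      hence Ta: "T a = a" using T12 a1 by simp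
      have "a*(S n + d*(b-n)) - (S n + d*(a*b-n)) = (a-1)*(S n - d*n)" by (simp add: algebra_simps)
      moreover have "(a-1)*(S n - d*n) \<ge> 0" using a1 snd by simp
      moreover have "T a * T b = a*(S n + d*(b-n))" using Ta Tb by simp
      ultimately show ?thesis by linarith
    next
      case False
      have Ta2: "T a \<ge> 2" using Tge2[of a] False aN abN by simp
      have R: "T a * (S n + d*(b-n)) - (S n + d*(a*b-n)) = (T a - 1)*(S n - d*n) + d*b*T a - d*(a*b)"
        by (simp add: algebra_simps)
      have "(T a - 2)*(S n - d*n) \<ge> 0" using Ta2 snd by simp
      hence r1: "(T a - 1)*(S n - d*n) \<ge> S n - d*n" by (simp add: algebra_simps)
      have r2: "d*b*T a \<ge> 0" using dpos bn n2 Ta2 by simp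
      have r3: "d*(a*b) \<le> d*N" using dpos abN by simp
      have "T a * T b = T a * (S n + d*(b-n))" using Tb by simp
      thus ?thesis using R r1 r2 r3 dN dn1 Sn2 by linarith
    qed
  qed
  have part_mult: "\<forall>x y. 1 \<le> x \<longrightarrow> 1 \<le> y \<longrightarrow> x * y \<le> N \<longrightarrow> T (x * y) \<le> T x * T y"
  proof (intro allI impI)
    fix x y :: real assume x1: "1 \<le> x" and y1: "1 \<le> y" and xyN: "x*y \<le> N"
    have xle: "x \<le> x*y" using x1 y1 by (simp add: mult_le_cancel_left1)
    have yle: "y \<le> x*y" using x1 y1 by (simp add: mult_le_cancel_right1)
    show "T (x*y) \<le> T x * T y"
    proof (cases "x*y \<le> n")
      case True
      then show ?thesis using TS[of "x*y"] TS[of x] TS[of y] xle yle mult x1 y1 by simp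
    next
      case False
      have Txy: "T (x*y) = S n + d*(x*y - n)" using Tlin False by simp
      show ?thesis
      proof (cases "n \<le> y")
        case True then show ?thesis using key[OF x1 True xyN] Txy by simp
      next
        case ny: False
        show ?thesis
        proof (cases "n \<le> x")
          case True then show ?thesis using key[OF y1 True] xyN Txy by (simp add: mult.commute)
        next
          case nx: False
          define x' where "x' = n / y"
          have ypos: "y > 0" using y1 by simp
          have x'y: "x' * y = n" using ypos x'_def by simp
          have x'1: "1 \<le> x'" using ny ypos x'_def by (simp add: le_divide_eq)
          have x'x: "x' \<le> x" using False ypos x'_def by (simp add: divide_le_eq)
          have "S n \<le> S x' * S y" using mult x'1 y1 x'y by (metis order_refl)
          moreover have sl: "S x - S x' \<ge> m*(x - x')" using slope[OF x'1 x'x] nx by simp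
          moreover have "S y \<ge> 1" using Sge1 y1 ny by simp
          moreover have "m*(x-x') \<ge> 0" using mpos x'x by simp
          ultimately have A: "S x * S y \<ge> S n + m*(x-x')"
          proof -
            assume h: "S n \<le> S x' * S y" "S x - S x' \<ge> m*(x - x')" "S y \<ge> 1" "m*(x-x') \<ge> 0"
            have "(S x - S x') * S y \<ge> (S x - S x') * 1"
              using h by (intro mult_left_mono) auto
            hence "(S x - S x') * S y \<ge> m*(x - x')" using h by simp
            thus ?thesis using h by (simp add: algebra_simps)
          qed
          have "d*(x*y - n) = (d*y)*(x - x')" using x'y by (simp add: algebra_simps)
          also have "\<dots> \<le> (d*n)*(x-x')" using dpos ny x'x by (intro mult_right_mono) auto
          also have "\<dots> \<le> m*(x-x')" using dnm mpos x'x by (intro mult_right_mono) auto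
          finally show ?thesis using A Txy TS[of x] TS[of y] nx ny by simp
        qed
      qed
    qed
  qed
  have "submultiplicative_on N T"
    unfolding submultiplicative_on_def by (intro conjI part_pl part_cont part_sm part_conc T12 part_mult)
  moreover have "\<forall>x\<in>{1..n}. T x = S x" using TS by auto
  ultimately show ?thesis using Nn TN by blast
qed

theorem lemma2p5:
  fixes n0 :: real and S :: "real \<Rightarrow> real"
  assumes "2 \<le> n0" and "submultiplicative_on n0 S"
  shows "\<forall>M>0. \<exists>N0 T. N0 > n0 \<and> (\<forall>x\<in>{1..n0}. T x = S x) \<and>
           submultiplicative_on N0 T \<and> T N0 > M"
proof (intro allI impI)
  fix M :: real assume "M > 0"
  have iter: "\<exists>N T. N \<ge> n0 \<and> (\<forall>x\<in>{1..n0}. T x = S x) \<and> submultiplicative_on N T \<and> T N \<ge> S n0 + real k"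
    for k :: nat
  proof (induction k)
    case 0
    show ?case using assms by (intro exI[of _ n0] exI[of _ S]) auto
  next
    case (Suc k)
    then obtain N T where NT: "N \<ge> n0" "\<forall>x\<in>{1..n0}. T x = S x" "submultiplicative_on N T"
      "T N \<ge> S n0 + real k" by blast
    have "2 \<le> N" using NT assms by simp
    from step[OF this NT(3)] obtain N' T' where N'T': "N' > N" "\<forall>x\<in>{1..N}. T' x = T x"
      "submultiplicative_on N' T'" "T' N' = T N + 1" by blast
    have "\<forall>x\<in>{1..n0}. T' x = S x" using NT(1,2) N'T'(2) by auto
    moreover have "N' \<ge> n0" using N'T'(1) NT(1) by simp
    moreover have "T' N' \<ge> S n0 + real (Suc k)" using N'T'(4) NT(4) by simp
    ultimately show ?case using N'T'(3) by blast
  qed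
  obtain k :: nat where k: "M - S n0 < real k" using reals_Archimedean2 by blast
  obtain N T where NT: "N \<ge> n0" "\<forall>x\<in>{1..n0}. T x = S x" "submultiplicative_on N T"
      "T N \<ge> S n0 + real k" using iter[of k] by blast
  have "2 \<le> N" using NT assms by simp
  from step[OF this NT(3)] obtain N' T' where N'T': "N' > N" "\<forall>x\<in>{1..N}. T' x = T x"
      "submultiplicative_on N' T'" "T' N' = T N + 1" by blast
  have "\<forall>x\<in>{1..n0}. T' x = S x" using NT(1,2) N'T'(2) by auto
  moreover have "N' > n0" using N'T'(1) NT(1) by simp
  moreover have "T' N' > M" using N'T'(4) NT(4) k by simp
  ultimately show "\<exists>N0 T. N0 > n0 \<and> (\<forall>x\<in>{1..n0}. T x = S x) \<and> submultiplicative_on N0 T \<and> T N0 > M"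
    using N'T'(3) by blast
qed

end
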